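(* Let $X$ be an $n$-dimensional real normed space and let $Y \subseteq X$ be a linear subspace of dimension $k$, where $1 \leq k \leq n-1$. Suppose that $x_0 \in X \setminus Y$ and $\{f_1, f_2, \ldots, f_l\} \subseteq \mathrm{ext}\, B_{X^*}$ is a minimal $I$-set for $Y$ with respect to $x_0$, where $l \geq 2$. Then the functionals $f_1|_Y, f_2|_Y, \ldots, f_{l-1}|_Y$ are linearly independent in $Y^*$.
   Context: $P_Y(x)=\{y\in Y:\|x-y\|=\mathrm{dist}(x,Y)\}$ is the set of best approximations of $x$ in $Y$. For $x_0\in X\setminus Y$, a set of functionals $\{f_1,\dots,f_l\}\subseteq \mathrm{ext}\,B_{X^*}$ (extreme points of the dual unit ball) is an $I$-set for $Y$ with respect to $x_0$ if there exist $y_0\in P_Y(x_0)$ and positive reals $\alpha_1,\dots,\alpha_l$ with $\sum_i\alpha_i=1$ such that $f_i(x_0-y_0)=\|x_0-y_0\|$ for all $i$ and $\sum_{i=1}^l\alpha_i f_i(y)=0$ for all $y\in Y$. An $I$-set is minimal if no proper subset of it is an $I$-set for $Y$ with respect to $x_0$. *)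

theory Defs
  imports "HOL-Analysis.Analysis"
begin

(* Dual space X* is modelled by the type of bounded linear functionals
   blinfun (operator norm); its closed unit ball is cball 0 1. *)

definition best_approx :: "'a::real_normed_vector set \<Rightarrow> 'a \<Rightarrow> 'a set" where
  "best_approx Y x = {y \<in> Y. norm (x - y) = infdist x Y}"

definition I_set :: "'a::real_normed_vector set \<Rightarrow> 'a \<Rightarrow> ('a \<Rightarrow>\<^sub>L real) set \<Rightarrow> bool" where
  "I_set Y x0 F \<longleftrightarrow> finite F \<and> (\<forall>f\<in>F. f extreme_point_of (cball 0 1)) \<and>
     (\<exists>y0 \<in> best_approx Y x0. \<exists>\<alpha> :: ('a \<Rightarrow>\<^sub>L real) \<Rightarrow> real.
        (\<forall>f\<in>F. \<alpha> f > 0) \<and> (\<Sum>f\<in>F. \<alpha> f) = 1 \<and>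
        (\<forall>f\<in>F. blinfun_apply f (x0 - y0) = norm (x0 - y0)) \<and>
        (\<forall>y\<in>Y. (\<Sum>f\<in>F. \<alpha> f * blinfun_apply f y) = 0))"

definition minimal_I_set :: "'a::real_normed_vector set \<Rightarrow> 'a \<Rightarrow> ('a \<Rightarrow>\<^sub>L real) set \<Rightarrow> bool" where
  "minimal_I_set Y x0 F \<longleftrightarrow> I_set Y x0 F \<and> (\<forall>G. G \<subset> F \<longrightarrow> \<not> I_set Y x0 G)"

end

theory Submission
  imports Defs
begin

theorem mainTheorem13:
  fixes Y :: "'a::real_normed_vector set" and x0 :: 'a
    and f :: "nat \<Rightarrow> ('a \<Rightarrow>\<^sub>L real)" and n k l :: nat
  assumes "dim (UNIV :: 'a set) = n"
    and "subspace Y" and "dim Y = k" and "1 \<le> k" and "k \<le> n - 1"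
    and "x0 \<notin> Y"
    and "2 \<le> l" and "inj_on f {..<l}"
    and "minimal_I_set Y x0 (f ` {..<l})"
  shows "\<forall>c :: nat \<Rightarrow> real.
           (\<forall>y\<in>Y. (\<Sum>i<l - 1. c i * blinfun_apply (f i) y) = 0) \<longrightarrow> (\<forall>i<l - 1. c i = 0)"
proof (rule allI, rule impI, rule ccontr)
  fix c :: "nat \<Rightarrow> real"
  assume hc: "\<forall>y\<in>Y. (\<Sum>i<l - 1. c i * blinfun_apply (f i) y) = 0"
    and nz: "\<not> (\<forall>i<l - 1. c i = 0)"
  have inj: "inj_on f {..<l}" by fact
  define F where "F = f ` {..<l}"
  have I: "I_set Y x0 F" and mini: "\<forall>G. G \<subset> F \<longrightarrow> \<not> I_set Y x0 G"
    using assms(9) unfolding minimal_I_set_def F_def by auto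
  from I obtain y0 \<alpha> where y0: "y0 \<in> best_approx Y x0"
    and apos: "\<forall>g\<in>F. \<alpha> g > 0" and asum: "(\<Sum>g\<in>F. \<alpha> g) = 1"
    and anorm: "\<forall>g\<in>F. blinfun_apply g (x0 - y0) = norm (x0 - y0)"
    and aY: "\<forall>y\<in>Y. (\<Sum>g\<in>F. \<alpha> g * blinfun_apply g y) = 0"
    and ext: "\<forall>g\<in>F. g extreme_point_of (cball 0 1)"
    unfolding I_set_def by blast
  define a where "a i = \<alpha> (f i)" for i
  have apos': "a i > 0" if "i < l" for i using apos that unfolding a_def F_def by auto
  have aY': "(\<Sum>i<l. a i * blinfun_apply (f i) y) = 0" if "y \<in> Y" for y
  proof -
    have "(\<Sum>g\<in>F. \<alpha> g * blinfun_apply g y) = (\<Sum>i<l. a i * blinfun_apply (f i) y)"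
      unfolding F_def a_def by (subst sum.reindex[OF inj]) simp
    then show ?thesis using aY that by simp
  qed
  obtain d :: "nat \<Rightarrow> real" where dY: "\<forall>y\<in>Y. (\<Sum>i<l - 1. d i * blinfun_apply (f i) y) = 0"
    and dpos: "\<exists>i<l-1. d i > 0"
  proof (cases "\<exists>i<l-1. c i > 0")
    case True then show ?thesis using that[of c] hc by blast
  next
    case False
    then have "\<exists>i<l-1. (- c i) > 0" using nz by force
    moreover have "\<forall>y\<in>Y. (\<Sum>i<l - 1. (- c i) * blinfun_apply (f i) y) = 0"
    proof
      fix y assume "y \<in> Y"
      have "(\<Sum>i<l - 1. (- c i) * blinfun_apply (f i) y) = - (\<Sum>i<l - 1. c i * blinfun_apply (f i) y)"
        by (simp add: sum_negf)
      then show "(\<Sum>i<l - 1. (- c i) * blinfun_apply (f i) y) = 0" using hc \<open>y \<in> Y\<close> by simp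
    qed
    ultimately show ?thesis using that[of "\<lambda>i. - c i"] by blast
  qed
  define d' where "d' i = (if i < l - 1 then d i else 0)" for i
  define P where "P = {i. i < l - 1 \<and> d i > 0}"
  have Pfin: "finite P" and Pne: "P \<noteq> {}" using dpos unfolding P_def by auto
  define t where "t = Min ((\<lambda>i. a i / d i) ` P)"
  obtain j where jP: "j \<in> P" and tj: "t = a j / d j"
  proof -
    have "t \<in> (\<lambda>i. a i / d i) ` P" unfolding t_def using Pfin Pne by (intro Min_in) auto
    then show ?thesis using that by blast
  qed
  have tle: "t \<le> a i / d i" if "i \<in> P" for i
    unfolding t_def using Pfin that by simp
  have jl: "j < l - 1" and dj: "d j > 0" using jP unfolding P_def by auto
  have tpos: "t > 0" using tj apos'[of j] jl dj by simp
  define b where "b i = a i - t * d' i" for i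
  have bnn: "b i \<ge> 0" if "i < l" for i
  proof (cases "i \<in> P")
    case True
    then have "d i > 0" "i < l - 1" unfolding P_def by auto
    with tle[OF True] have "t * d i \<le> a i" by (simp add: field_simps)
    then show ?thesis unfolding b_def d'_def using \<open>i < l - 1\<close> by simp
  next
    case False
    then have "d' i \<le> 0" unfolding P_def d'_def by auto
    then have "t * d' i \<le> 0" using tpos by (simp add: mult_nonneg_nonpos)
    then show ?thesis unfolding b_def using apos'[OF that] by simp
  qed
  have bj: "b j = 0" unfolding b_def d'_def using jl tj dj by simp
  have llast: "l - 1 < l" using assms(7) by simp
  have blast: "b (l - 1) > 0" unfolding b_def d'_def using apos'[OF llast] by simp
  have bY: "(\<Sum>i<l. b i * blinfun_apply (f i) y) = 0" if "y \<in> Y" for y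
  proof -
    have "(\<Sum>i<l. d' i * blinfun_apply (f i) y) = (\<Sum>i<l-1. d' i * blinfun_apply (f i) y)"
      by (rule sum.mono_neutral_right) (auto simp: d'_def)
    also have "\<dots> = (\<Sum>i<l-1. d i * blinfun_apply (f i) y)"
      by (rule sum.cong) (auto simp: d'_def)
    also have "\<dots> = 0" using dY that by simp
    finally have h0: "(\<Sum>i<l. d' i * blinfun_apply (f i) y) = 0" .
    have "(\<Sum>i<l. b i * blinfun_apply (f i) y) =
      (\<Sum>i<l. a i * blinfun_apply (f i) y) - t * (\<Sum>i<l. d' i * blinfun_apply (f i) y)"
      unfolding b_def by (simp add: algebra_simps sum_subtractf sum_distrib_left)
    then show ?thesis using h0 aY'[OF that] by simp
  qed
  define K where "K = {i. i < l \<and> b i > 0}"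
  define S where "S = (\<Sum>i<l. b i)"
  have SK: "S = (\<Sum>i\<in>K. b i)"
    unfolding S_def K_def
    by (rule sum.mono_neutral_left[symmetric]) (auto, metis bnn less_eq_real_def)
  have Spos: "S > 0"
  proof -
    have "b (l - 1) \<le> S" unfolding S_def
      using llast bnn by (intro member_le_sum) auto
    then show ?thesis using blast by simp
  qed
  define G where "G = f ` K"
  define \<gamma> where "\<gamma> g = b (inv_into {..<l} f g) / S" for g
  have injK: "inj_on f K" using inj unfolding K_def by (rule inj_on_subset) auto
  have \<gamma>f: "\<gamma> (f i) = b i / S" if "i \<in> K" for i
    unfolding \<gamma>_def using that inv_into_f_f[OF inj] unfolding K_def by auto
  have GF: "G \<subseteq> F" unfolding G_def F_def K_def by auto
  have fjnot: "f j \<notin> G"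
  proof
    assume "f j \<in> G"
    then obtain i where "i \<in> K" "f i = f j" unfolding G_def by auto
    then have "i = j" using inj jl unfolding K_def by (auto dest: inj_onD)
    then show False using \<open>i \<in> K\<close> bj unfolding K_def by simp
  qed
  have "f j \<in> F" unfolding F_def using jl by simp
  then have GsF: "G \<subset> F" using GF fjnot by blast
  have "I_set Y x0 G"
    unfolding I_set_def
  proof (intro conjI)
    show "\<exists>y0 \<in> best_approx Y x0. \<exists>\<alpha>.
        (\<forall>f\<in>G. \<alpha> f > 0) \<and> (\<Sum>f\<in>G. \<alpha> f) = 1 \<and>
        (\<forall>f\<in>G. blinfun_apply f (x0 - y0) = norm (x0 - y0)) \<and>
        (\<forall>y\<in>Y. (\<Sum>f\<in>G. \<alpha> f * blinfun_apply f y) = 0)"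
    proof (intro bexI[OF _ y0] exI[of _ \<gamma>] conjI)
    show "\<forall>g\<in>G. 0 < \<gamma> g" unfolding G_def using \<gamma>f Spos by (auto simp: K_def)
    show "sum \<gamma> G = 1"
      unfolding G_def using Spos SK by (simp add: sum.reindex[OF injK] \<gamma>f sum_divide_distrib[symmetric])
    show "\<forall>g\<in>G. blinfun_apply g (x0 - y0) = norm (x0 - y0)" using anorm GF by blast
    show "\<forall>y\<in>Y. (\<Sum>g\<in>G. \<gamma> g * blinfun_apply g y) = 0"
    proof
      fix y assume yY: "y \<in> Y"
      have "(\<Sum>g\<in>G. \<gamma> g * blinfun_apply g y) = (\<Sum>i\<in>K. b i / S * blinfun_apply (f i) y)"
        unfolding G_def by (simp add: sum.reindex[OF injK] \<gamma>f)
      also have "\<dots> = (\<Sum>i<l. b i / S * blinfun_apply (f i) y)"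
        unfolding K_def
        by (rule sum.mono_neutral_left) (auto, metis bnn less_eq_real_def)
      also have "\<dots> = (\<Sum>i<l. b i * blinfun_apply (f i) y) / S"
        by (simp add: sum_divide_distrib)
      also have "\<dots> = 0" using bY[OF yY] by simp
      finally show "(\<Sum>g\<in>G. \<gamma> g * blinfun_apply g y) = 0" .
    qed
    qed
  qed (use ext GF in \<open>auto simp: G_def K_def\<close>)
  then show False using mini GsF by blast
qed

end
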